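(* Let $(\mathbf k,\log)$ be an ordered field with surjective logarithm and $(\mathbf k((G)),l)$ a series field with prelogarithmic section. Let $H\ne\{1\}$ be a subgroup of $G$ satisfying the growth axiom. Define $H^{-1}=\{1\}$, $H^0=H$ and inductively $H^{n+1}=H^n\cdot\mathrm{Exp}\,\mathbf k(((H^n)^{>H^{n-1}}))\subseteq G^{\#(n+1)}$. Then for every $n\ge0$: $H^n$ is a proper convex subgroup of $H^{n+1}$, $H^{n+1}$ is the anti-lexicographic product of $H^n$ and $\mathrm{Exp}\,\mathbf k(((H^n)^{>H^{n-1}}))$, and $\mathrm{Log}(h)<|f|$ for all $h\in H^{n+1}$ and all nonzero $f\in\mathbf k(((H^{n+1})^{>H^n}))$.
   Context: Let $\mathbf k$ be an ordered field and $(G,\cdot,<)$ a totally ordered abelian group (written multiplicatively). $\mathbf k((G))$ denotes the field of generalized power series $\alpha=\sum_{g\in G}\alpha(g)\,g$ ($\alpha(g)\in\mathbf k$) with anti-well-ordered support, usual operations, canonical valuation $v(\alpha)=\max\operatorname{supp}\alpha$ and ordering $\alpha>0$ iff $\alpha(v(\alpha))>0$; $\mathbf k$, $G$ are identified with subsets of $\mathbf k((G))$. For $S\subseteq G$, $\mathbf k((S))=\{\alpha:\operatorname{supp}\alpha\subseteq S\}$. For a subgroup $H$ and $A\subseteq G$, $H^{>A}=\{h\in H:h>a\ \forall a\in A\}$, $H^{>1}=\{h\in H:h>1\}$. Every $\alpha>0$ is uniquely $\alpha=g\,a(1+\varepsilon)$ with $g=v(\alpha)$, $a\in\mathbf k^{>0}$,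 $\varepsilon\in\mathbf k((G^{<1}))$. A prelogarithmic section is an order-preserving group embedding $l:(G,\cdot)\to(\mathbf k((G^{>1})),+)$; $\log:(\mathbf k^{>0},\cdot)\to(\mathbf k,+)$ is an order-preserving group isomorphism. The prelogarithm of $l$ is $L(g\,a(1+\varepsilon))=l(g)+\log a+\sum_{i\ge1}(-1)^{i-1}\varepsilon^i/i$. Exponential extension: $G^\#$ is the ordered abelian group of formal symbols $e(\alpha)$, $\alpha\in\mathbf k((G^{>1}))$, with $e(\alpha)e(\beta)=e(\alpha+\beta)$, $e(\alpha)<e(\beta)\iff\alpha<\beta$, and $e(l(g))$ identified with $g\in G$; $l^\#(e(\alpha))=\alpha$ is a prelogarithmic section of $\mathbf k((G^\#))$ extending $l$. Iterating: $G^{\#n}$, $l^{\#n}$, prelogarithms $L^{\#n}$. The EL-series field is $\mathbf k((G))^{EL}=\bigcup_n\mathbf k((G^{\#n}))$ with $\mathrm{Log}=\bigcup_nL^{\#n}$, an order preserving isomorphism from the positive elements onto $(\mathbf k((G))^{EL},+)$; $\mathrm{Exp}=\mathrm{Log}^{-1}$. A subgroup $H\ne\{1\}$ of $G$ satisfies the growth axiom if $\mathrm{Log}(h)<|f|$ for all $h\in H$ and all nonzero $f\in\mathbf k((H^{>1}))$. "Anti-lexicographic product" of subgroups $A,B$: the group is $A\cdot B$, the product is direct and $A$ is convex in it. *)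

theory Defs
  imports Main
begin

text \<open>
  The ordered abelian group is written additively: an ambient
  type 'g :: linordered_ab_group_add, with identity 0 (the paper's 1).
  A generalized power series with coefficients in 'k and exponents in 'g is a
  function 'g => 'k; k((S)) is the set of such functions with anti-well-ordered
  support contained in S.
\<close>

definition supp :: "('g \<Rightarrow> 'k::zero) \<Rightarrow> 'g set" where
  "supp f = {g. f g \<noteq> 0}"

definition anti_wo :: "'g::linorder set \<Rightarrow> bool" where
  "anti_wo S \<longleftrightarrow> wf {(x, y). x \<in> S \<and> y \<in> S \<and> y < x}"

definition series_on :: "'g::linorder set \<Rightarrow> ('g \<Rightarrow> 'k::zero) set" where
  "series_on S = {f. supp f \<subseteq> S \<and> anti_wo (supp f)}"

definition sval :: "('g::linorder \<Rightarrow> 'k::zero) \<Rightarrow> 'g" where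
  "sval f = (GREATEST g. g \<in> supp f)"

definition spos :: "('g::linorder \<Rightarrow> 'k::linordered_field) \<Rightarrow> bool" where
  "spos f \<longleftrightarrow> supp f \<noteq> {} \<and> f (sval f) > 0"

definition sless :: "('g::linorder \<Rightarrow> 'k::linordered_field) \<Rightarrow> ('g \<Rightarrow> 'k) \<Rightarrow> bool" where
  "sless f h \<longleftrightarrow> spos (\<lambda>x. h x - f x)"

definition sabs :: "('g::linorder \<Rightarrow> 'k::linordered_field) \<Rightarrow> 'g \<Rightarrow> 'k" where
  "sabs f = (if spos f then f else (\<lambda>x. - f x))"

definition add_subgroup :: "'g::ab_group_add set \<Rightarrow> bool" where
  "add_subgroup A \<longleftrightarrow> 0 \<in> A \<and> (\<forall>a\<in>A. \<forall>b\<in>A. a + b \<in> A) \<and> (\<forall>a\<in>A. - a \<in> A)"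

definition set_plus :: "'g::plus set \<Rightarrow> 'g set \<Rightarrow> 'g set" where
  "set_plus A B = {a + b | a b. a \<in> A \<and> b \<in> B}"

definition convex_in :: "'g::order set \<Rightarrow> 'g set \<Rightarrow> bool" where
  "convex_in A B \<longleftrightarrow> (\<forall>a\<in>A. \<forall>b\<in>A. \<forall>c\<in>B. a \<le> c \<and> c \<le> b \<longrightarrow> c \<in> A)"

definition antilex_product :: "'g::linordered_ab_group_add set \<Rightarrow> 'g set \<Rightarrow> 'g set \<Rightarrow> bool" where
  "antilex_product C A B \<longleftrightarrow> add_subgroup A \<and> add_subgroup B \<and> C = set_plus A B
     \<and> A \<inter> B = {0} \<and> convex_in A C"

definition is_log :: "('k::linordered_field \<Rightarrow> 'k) \<Rightarrow> bool" where
  "is_log lg \<longleftrightarrow> bij_betw lg {0<..} UNIV \<and> strict_mono_on {0<..} lg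
     \<and> (\<forall>a>0. \<forall>b>0. lg (a * b) = lg a + lg b)"

definition is_prelog_section :: "'g::linordered_ab_group_add set \<Rightarrow> ('g \<Rightarrow> 'g \<Rightarrow> 'k::linordered_field) \<Rightarrow> bool" where
  "is_prelog_section A l \<longleftrightarrow>
     (\<forall>g\<in>A. l g \<in> series_on {h\<in>A. 0 < h}) \<and>
     (\<forall>g\<in>A. \<forall>h\<in>A. l (g + h) = (\<lambda>x. l g x + l h x)) \<and>
     (\<forall>g\<in>A. \<forall>h\<in>A. g < h \<longrightarrow> sless (l g) (l h))"

text \<open>
  The tower of iterated exponential extensions G = G^{#0} <= G^{#1} <= ...,
  realised inside the ambient group 'g, together with Ls = the union of the
  sections l^{#n}. The defining property of G^{#(n+1)}: l^{#(n+1)} is an order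
  preserving group isomorphism of G^{#(n+1)} onto k((G^{#n >1})) which extends
  l^{#n} (with e(l^{#n}(g)) identified with g).
\<close>
definition is_exp_tower ::
  "'g::linordered_ab_group_add set \<Rightarrow> ('g \<Rightarrow> 'g \<Rightarrow> 'k::linordered_field)
    \<Rightarrow> (nat \<Rightarrow> 'g set) \<Rightarrow> ('g \<Rightarrow> 'g \<Rightarrow> 'k) \<Rightarrow> bool" where
  "is_exp_tower G l Gs Ls \<longleftrightarrow>
     Gs 0 = G \<and> (\<forall>g\<in>G. Ls g = l g) \<and>
     (\<forall>n. add_subgroup (Gs n) \<and> Gs n \<subseteq> Gs (Suc n)) \<and>
     (\<forall>n. bij_betw Ls (Gs (Suc n)) (series_on {h\<in>Gs n. 0 < h})) \<and>
     (\<forall>n. \<forall>g\<in>Gs (Suc n). \<forall>h\<in>Gs (Suc n). Ls (g + h) = (\<lambda>x. Ls g x + Ls h x)) \<and>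
     (\<forall>n. \<forall>g\<in>Gs (Suc n). \<forall>h\<in>Gs (Suc n). g < h \<longleftrightarrow> sless (Ls g) (Ls h))"

text \<open>
  Log of a monomial h (an element of some G^{#n}): h = h * 1 * (1 + 0), so by the
  definition of the prelogarithm, Log(h) = l^{#n}(h) + log 1 + 0 = l^{#n}(h).
\<close>
definition Log_mono :: "('g \<Rightarrow> 'g \<Rightarrow> 'k) \<Rightarrow> 'g \<Rightarrow> 'g \<Rightarrow> 'k" where
  "Log_mono Ls h = Ls h"

text \<open>
  Exp of a set F of purely infinite series in k((G^{#n >1})): Exp(f) = e(f) is the
  unique element of G^{#(n+1)} whose section is f.
\<close>
definition Exp_set :: "(nat \<Rightarrow> 'g set) \<Rightarrow> ('g \<Rightarrow> 'g \<Rightarrow> 'k) \<Rightarrow> nat \<Rightarrow> ('g \<Rightarrow> 'k) set \<Rightarrow> 'g set" where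
  "Exp_set Gs Ls n F = {g \<in> Gs (Suc n). Ls g \<in> F}"

definition above :: "'g::order set \<Rightarrow> 'g set \<Rightarrow> 'g set" where
  "above A B = {h \<in> A. \<forall>b\<in>B. b < h}"

text \<open>Htow n = H^{n-1}: Htow 0 = H^{-1} = {0}, Htow 1 = H^0 = H,
  H^{n+1} = H^n + Exp k(((H^n)^{> H^{n-1}})) inside G^{#(n+1)}.\<close>
fun Htow :: "(nat \<Rightarrow> 'g::linordered_ab_group_add set) \<Rightarrow> ('g \<Rightarrow> 'g \<Rightarrow> 'k::linordered_field)
              \<Rightarrow> 'g set \<Rightarrow> nat \<Rightarrow> 'g set" where
  "Htow Gs Ls H 0 = {0}"
| "Htow Gs Ls H (Suc 0) = H"
| "Htow Gs Ls H (Suc (Suc n)) =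
     set_plus (Htow Gs Ls H (Suc n))
       (Exp_set Gs Ls n (series_on (above (Htow Gs Ls H (Suc n)) (Htow Gs Ls H n))))"

definition growth_axiom :: "('g \<Rightarrow> 'g \<Rightarrow> 'k::linordered_field) \<Rightarrow> 'g::linordered_ab_group_add set \<Rightarrow> bool" where
  "growth_axiom Ls H \<longleftrightarrow> (\<forall>h\<in>H. \<forall>f\<in>series_on {x\<in>H. 0 < x}.
      f \<noteq> (\<lambda>_. 0) \<longrightarrow> sless (Log_mono Ls h) (sabs f))"

end

theory Submission imports Defs begin

lemma anti_wo_iff:
  "anti_wo (S::'g::linorder set) \<longleftrightarrow> (\<forall>T. T \<subseteq> S \<longrightarrow> T \<noteq> {} \<longrightarrow> (\<exists>m\<in>T. \<forall>y\<in>T. y \<le> m))"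
proof
  assume a: "anti_wo S"
  show "\<forall>T. T \<subseteq> S \<longrightarrow> T \<noteq> {} \<longrightarrow> (\<exists>m\<in>T. \<forall>y\<in>T. y \<le> m)"
  proof (intro allI impI)
    fix T assume T: "T \<subseteq> S" "T \<noteq> {}"
    then obtain x where "x \<in> T" by auto
    with a obtain z where z: "z \<in> T" "\<forall>y. (y, z) \<in> {(x, y). x \<in> S \<and> y \<in> S \<and> y < x} \<longrightarrow> y \<notin> T"
      unfolding anti_wo_def wf_eq_minimal by blast
    show "\<exists>m\<in>T. \<forall>y\<in>T. y \<le> m"
      using z T by (intro bexI[of _ z]) (auto simp: not_less[symmetric])
  qed
next
  assume b: "\<forall>T. T \<subseteq> S \<longrightarrow> T \<noteq> {} \<longrightarrow> (\<exists>m\<in>T. \<forall>y\<in>T. y \<le> m)"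
  show "anti_wo S" unfolding anti_wo_def
  proof (rule wfI_min)
    fix x :: 'g and Q assume xQ: "x \<in> Q"
    show "\<exists>z\<in>Q. \<forall>y. (y, z) \<in> {(x, y). x \<in> S \<and> y \<in> S \<and> y < x} \<longrightarrow> y \<notin> Q"
    proof (cases "Q \<inter> S = {}")
      case True thus ?thesis using xQ by auto
    next
      case False
      then obtain m where "m \<in> Q \<inter> S" "\<forall>y\<in>Q \<inter> S. y \<le> m" using b by (meson inf_le2)
      thus ?thesis by (intro bexI[of _ m]) (auto simp: not_less[symmetric])
    qed
  qed
qed

lemma anti_wo_max: "anti_wo S \<Longrightarrow> S \<noteq> {} \<Longrightarrow> \<exists>m\<in>S. \<forall>y\<in>S. y \<le> m"
  using anti_wo_iff by blast

lemma anti_wo_subset: "anti_wo S \<Longrightarrow> T \<subseteq> S \<Longrightarrow> anti_wo T"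
  unfolding anti_wo_iff by blast

lemma anti_wo_Un:
  assumes "anti_wo (A::'g::linorder set)" "anti_wo B" shows "anti_wo (A \<union> B)"
  unfolding anti_wo_iff
proof (intro allI impI)
  fix T assume T: "T \<subseteq> A \<union> B" "T \<noteq> {}"
  show "\<exists>m\<in>T. \<forall>y\<in>T. y \<le> m"
  proof (cases "T \<inter> A = {}")
    case True
    hence "T \<subseteq> B" using T by auto
    thus ?thesis using assms(2) T unfolding anti_wo_iff by blast
  next
    case FA: False
    obtain a where a: "a \<in> T \<inter> A" "\<forall>y\<in>T \<inter> A. y \<le> a" using assms(1) FA unfolding anti_wo_iff by (meson inf_le2)
    show ?thesis
    proof (cases "T \<inter> B = {}")
      case True
      thus ?thesis using a T by (intro bexI[of _ a]) auto
    next
      case False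
      obtain b where b: "b \<in> T \<inter> B" "\<forall>y\<in>T \<inter> B. y \<le> b" using assms(2) False unfolding anti_wo_iff by (meson inf_le2)
      show ?thesis
      proof (cases "a \<le> b")
        case True
        have "\<forall>y\<in>T. y \<le> b"
        proof
          fix y assume "y \<in> T"
          hence "y \<in> T \<inter> A \<or> y \<in> T \<inter> B" using T by blast
          thus "y \<le> b" using a b True by force
        qed
        thus ?thesis using b by blast
      next
        case False
        hence ba: "b \<le> a" by simp
        have "\<forall>y\<in>T. y \<le> a"
        proof
          fix y assume "y \<in> T"
          hence "y \<in> T \<inter> A \<or> y \<in> T \<inter> B" using T by blast
          thus "y \<le> a" using a b ba by force
        qed
        thus ?thesis using a by blast
      qed
    qed
  qed
qed

lemma anti_wo_single: "anti_wo {x::'g::linorder}"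
  unfolding anti_wo_def by (rule wf_subset[of "{}"]) auto

lemma sval_eq: "M \<in> supp D \<Longrightarrow> (\<forall>z\<in>supp D. z \<le> M) \<Longrightarrow> sval D = M"
  unfolding sval_def by (rule Greatest_equality) auto

lemma supp_add: "supp (\<lambda>x. (f::_\<Rightarrow>'k::monoid_add) x + g x) \<subseteq> supp f \<union> supp g"
  unfolding supp_def by auto

lemma supp_neg: "supp (\<lambda>x. - (f::_\<Rightarrow>'k::ab_group_add) x) = supp f"
  unfolding supp_def by auto

lemma series_zero: "(\<lambda>_. 0) \<in> series_on S"
  unfolding series_on_def supp_def anti_wo_def by auto

lemma series_add: "(f::_\<Rightarrow>'k::monoid_add) \<in> series_on S \<Longrightarrow> g \<in> series_on S \<Longrightarrow> (\<lambda>x. f x + g x) \<in> series_on S"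
  unfolding series_on_def using supp_add[of f g] anti_wo_Un anti_wo_subset by blast

lemma series_neg: "f \<in> series_on S \<Longrightarrow> (\<lambda>x. - (f::_\<Rightarrow>'k::ab_group_add) x) \<in> series_on S"
  unfolding series_on_def using supp_neg[of f] by auto

lemma sabs_cases: "sabs f = f \<or> sabs f = (\<lambda>x. - f x)"
  unfolding sabs_def by auto

lemma sabs_lead:
  fixes f :: "'g::linorder \<Rightarrow> 'k::linordered_field"
  assumes "m \<in> supp f" "\<forall>y\<in>supp f. y \<le> m"
  shows "sabs f m > 0" "supp (sabs f) = supp f"
proof -
  have sv: "sval f = m" using assms sval_eq by blast
  have "f m \<noteq> 0" using assms(1) by (simp add: supp_def)
  thus "sabs f m > 0" unfolding sabs_def spos_def sv using assms(1) by auto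
  show "supp (sabs f) = supp f" unfolding sabs_def using supp_neg[of f] by auto
qed


context
  fixes G :: "'g::linordered_ab_group_add set" and l Ls :: "'g \<Rightarrow> 'g \<Rightarrow> 'k::linordered_field"
    and Gs :: "nat \<Rightarrow> 'g set"
  assumes T: "is_exp_tower G l Gs Ls"
begin

lemma T_sub: "add_subgroup (Gs n)" and T_mono: "Gs n \<subseteq> Gs (Suc n)"
  and T_bij: "bij_betw Ls (Gs (Suc n)) (series_on {h\<in>Gs n. 0 < h})"
  and T_add: "g \<in> Gs (Suc n) \<Longrightarrow> h \<in> Gs (Suc n) \<Longrightarrow> Ls (g + h) = (\<lambda>x. Ls g x + Ls h x)"
  and T_ord: "g \<in> Gs (Suc n) \<Longrightarrow> h \<in> Gs (Suc n) \<Longrightarrow> g < h \<longleftrightarrow> sless (Ls g) (Ls h)"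
  using T unfolding is_exp_tower_def by blast+

lemma T_zero: "0 \<in> Gs n" using T_sub unfolding add_subgroup_def by blast

lemma Ls0: "Ls 0 = (\<lambda>_. 0)"
proof -
  have "Ls (0 + 0) = (\<lambda>x. Ls 0 x + Ls 0 x)" using T_add[of 0 0] T_zero by blast
  thus ?thesis by (metis add.right_neutral add_left_imp_eq)
qed

lemma Lsneg: "g \<in> Gs (Suc n) \<Longrightarrow> Ls (- g) = (\<lambda>x. - Ls g x)"
proof -
  assume g: "g \<in> Gs (Suc n)"
  hence "- g \<in> Gs (Suc n)" using T_sub unfolding add_subgroup_def by blast
  hence "Ls (g + - g) = (\<lambda>x. Ls g x + Ls (- g) x)" using T_add g by blast
  hence "\<And>x. Ls g x + Ls (- g) x = 0" using Ls0 by (metis add.right_inverse)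
  thus ?thesis by (metis add_eq_0_iff)
qed

lemma Ls_ser: "g \<in> Gs (Suc n) \<Longrightarrow> Ls g \<in> series_on {h\<in>Gs n. 0 < h}"
  using T_bij unfolding bij_betw_def by blast

lemma Ls_inj: "g \<in> Gs (Suc n) \<Longrightarrow> h \<in> Gs (Suc n) \<Longrightarrow> Ls g = Ls h \<Longrightarrow> g = h"
  using T_bij unfolding bij_betw_def inj_on_def by blast

lemma Ls_surj: "f \<in> series_on {h\<in>Gs n. 0 < h} \<Longrightarrow> \<exists>g\<in>Gs (Suc n). Ls g = f"
proof -
  assume "f \<in> series_on {h\<in>Gs n. 0 < h}"
  hence "f \<in> Ls ` Gs (Suc n)" using T_bij[of n] unfolding bij_betw_def by blast
  thus ?thesis by force
qed

end

definition growthP :: "('g \<Rightarrow> 'g \<Rightarrow> 'k::linordered_field) \<Rightarrow> 'g::linordered_ab_group_add set \<Rightarrow> 'g set \<Rightarrow> bool" where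
  "growthP Ls B A \<longleftrightarrow> (\<forall>h\<in>B. \<forall>f\<in>series_on (above B A). f \<noteq> (\<lambda>_. 0) \<longrightarrow> sless (Log_mono Ls h) (sabs f))"

lemma sg_zero: "add_subgroup A \<Longrightarrow> 0 \<in> A" and sg_add: "add_subgroup A \<Longrightarrow> a \<in> A \<Longrightarrow> b \<in> A \<Longrightarrow> a + b \<in> A"
  and sg_neg: "add_subgroup A \<Longrightarrow> a \<in> A \<Longrightarrow> - a \<in> A"
  unfolding add_subgroup_def by blast+

lemma sg_diff: "add_subgroup A \<Longrightarrow> a \<in> A \<Longrightarrow> b \<in> A \<Longrightarrow> a - b \<in> A"
  using sg_add sg_neg by (metis diff_conv_add_uminus)

lemma set_plus_sg:
  assumes "add_subgroup (A::'g::ab_group_add set)" "add_subgroup B" shows "add_subgroup (set_plus A B)"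
  unfolding add_subgroup_def set_plus_def
proof (intro conjI ballI)
  have "(0::'g) = 0 + 0" by simp
  thus "0 \<in> {a + b |a b. a \<in> A \<and> b \<in> B}" using assms sg_zero by blast
next
  fix x y assume "x \<in> {a + b |a b. a \<in> A \<and> b \<in> B}" "y \<in> {a + b |a b. a \<in> A \<and> b \<in> B}"
  then obtain a1 b1 a2 b2 where "x = a1 + b1" "y = a2 + b2" "a1 \<in> A" "a2 \<in> A" "b1 \<in> B" "b2 \<in> B" by blast
  moreover have "a1 + b1 + (a2 + b2) = (a1 + a2) + (b1 + b2)" by (simp add: algebra_simps)
  ultimately show "x + y \<in> {a + b |a b. a \<in> A \<and> b \<in> B}" using assms sg_add by fastforce
next
  fix x assume "x \<in> {a + b |a b. a \<in> A \<and> b \<in> B}"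
  then obtain a1 b1 where "x = a1 + b1" "a1 \<in> A" "b1 \<in> B" by blast
  moreover have "- (a1 + b1) = (- a1) + (- b1)" by (simp add: algebra_simps)
  ultimately show "- x \<in> {a + b |a b. a \<in> A \<and> b \<in> B}" using assms sg_neg by fastforce
qed

context
  fixes G :: "'g::linordered_ab_group_add set" and l Ls :: "'g \<Rightarrow> 'g \<Rightarrow> 'k::linordered_field"
    and Gs :: "nat \<Rightarrow> 'g set" and A B :: "'g set" and n :: nat
  assumes T: "is_exp_tower G l Gs Ls"
    and sgB: "add_subgroup B" and BG: "B \<subseteq> Gs n" and A0: "0 \<in> A"
    and ne: "above B A \<noteq> {}" and gr: "growthP Ls B A"
begin

abbreviation "EE \<equiv> Exp_set Gs Ls n (series_on (above B A))"

lemma S_sub: "above B A \<subseteq> {h\<in>Gs n. 0 < h}"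
  using BG A0 unfolding above_def by auto

lemma BG1: "B \<subseteq> Gs (Suc n)" using BG T_mono[OF T] by blast

lemma E_G: "EE \<subseteq> Gs (Suc n)" unfolding Exp_set_def by auto

lemma E_sg: "add_subgroup EE"
  unfolding add_subgroup_def Exp_set_def
proof (intro conjI ballI)
  show "0 \<in> {g \<in> Gs (Suc n). Ls g \<in> series_on (above B A)}"
    using T_zero[OF T] Ls0[OF T] series_zero by auto
next
  fix a b assume "a \<in> {g \<in> Gs (Suc n). Ls g \<in> series_on (above B A)}" "b \<in> {g \<in> Gs (Suc n). Ls g \<in> series_on (above B A)}"
  thus "a + b \<in> {g \<in> Gs (Suc n). Ls g \<in> series_on (above B A)}"
    using T_add[OF T] series_add sg_add[OF T_sub[OF T]] by auto
next
  fix a assume "a \<in> {g \<in> Gs (Suc n). Ls g \<in> series_on (above B A)}"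
  thus "- a \<in> {g \<in> Gs (Suc n). Ls g \<in> series_on (above B A)}"
    using Lsneg[OF T] series_neg sg_neg[OF T_sub[OF T]] by auto
qed

lemma key:
  assumes e: "e \<in> EE" "e \<noteq> 0"
  shows "\<exists>e'. (e' = e \<or> e' = - e) \<and> (\<forall>x\<in>B. x < e')"
proof -
  define f where "f = Ls e"
  have eG: "e \<in> Gs (Suc n)" and fS: "f \<in> series_on (above B A)" using e unfolding Exp_set_def f_def by auto
  have "f \<noteq> (\<lambda>_. 0)"
  proof
    assume "f = (\<lambda>_. 0)"
    hence "Ls e = Ls 0" using Ls0[OF T] f_def by simp
    thus False using Ls_inj[OF T eG T_zero[OF T]] e by blast
  qed
  hence g: "\<forall>x\<in>B. sless (Ls x) (sabs f)" using gr fS unfolding growthP_def Log_mono_def by blast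
  from sabs_cases[of f] show ?thesis
  proof
    assume "sabs f = f"
    hence "\<forall>x\<in>B. x < e" using g T_ord[OF T] eG BG1 f_def by auto
    thus ?thesis by blast
  next
    assume "sabs f = (\<lambda>x. - f x)"
    hence s: "sabs f = Ls (- e)" using Lsneg[OF T eG] f_def by simp
    have "- e \<in> Gs (Suc n)" using eG sg_neg[OF T_sub[OF T]] by blast
    hence "\<forall>x\<in>B. x < - e" using g s T_ord[OF T] BG1 by auto
    thus ?thesis by blast
  qed
qed

lemma BE: "B \<inter> EE = {0}"
proof
  show "B \<inter> EE \<subseteq> {0}"
  proof
    fix x assume x: "x \<in> B \<inter> EE"
    show "x \<in> {0}"
    proof (rule ccontr)
      assume "x \<notin> {0}"
      then obtain e' where "e' = x \<or> e' = - x" "\<forall>y\<in>B. y < e'" using key x by blast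
      moreover have "x \<in> B" "- x \<in> B" using x sg_neg[OF sgB] by auto
      ultimately show False by blast
    qed
  qed
  show "{0} \<subseteq> B \<inter> EE" using sg_zero[OF sgB] sg_zero[OF E_sg] by auto
qed

lemma convex: "convex_in B (set_plus B EE)"
  unfolding convex_in_def
proof (intro ballI impI)
  fix a b c assume ab: "a \<in> B" "b \<in> B" and c: "c \<in> set_plus B EE" and le: "a \<le> c \<and> c \<le> b"
  from c obtain h e where he: "c = h + e" "h \<in> B" "e \<in> EE" unfolding set_plus_def by blast
  show "c \<in> B"
  proof (cases "e = 0")
    case True thus ?thesis using he by simp
  next
    case False
    then obtain e' where e': "e' = e \<or> e' = - e" "\<forall>x\<in>B. x < e'" using key he by blast
    have 1: "a - h \<le> e" "e \<le> b - h" using le he by (simp_all add: algebra_simps)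
    have "b - h \<in> B" "h - a \<in> B" using ab he sg_diff[OF sgB] by auto
    hence "b - h < e'" "h - a < e'" using e' by auto
    with e'(1) 1 have False
      by (metis less_le_not_le minus_diff_eq neg_le_iff_le)
    thus ?thesis ..
  qed
qed

lemma B_sub: "B \<subseteq> set_plus B EE"
  unfolding set_plus_def using sg_zero[OF E_sg] by force

lemma E_sub: "EE \<subseteq> set_plus B EE"
  unfolding set_plus_def using sg_zero[OF sgB] by force

lemma proper_witness: "\<exists>e'\<in>set_plus B EE. e' \<notin> B \<and> e' \<in> above (set_plus B EE) B"
proof -
  obtain x0 where x0: "x0 \<in> above B A" using ne by blast
  define m0 :: "'g \<Rightarrow> 'k" where "m0 = (\<lambda>z. if z = x0 then 1 else 0)"
  have sm: "supp m0 = {x0}" unfolding m0_def supp_def by auto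
  have m0S: "m0 \<in> series_on (above B A)" unfolding series_on_def using sm x0 anti_wo_single by auto
  hence "m0 \<in> series_on {h\<in>Gs n. 0 < h}" using S_sub unfolding series_on_def by auto
  then obtain e where eG: "e \<in> Gs (Suc n)" and le: "Ls e = m0" using Ls_surj[OF T] by blast
  have eE: "e \<in> EE" using eG le m0S unfolding Exp_set_def by auto
  have "e \<noteq> 0"
  proof
    assume "e = 0" hence "m0 = (\<lambda>_. 0)" using le Ls0[OF T] by simp
    hence "m0 x0 = 0" by simp
    thus False unfolding m0_def by simp
  qed
  then obtain e' where e': "e' = e \<or> e' = - e" "\<forall>x\<in>B. x < e'" using key eE by blast
  have "e' \<in> EE" using e' eE sg_neg[OF E_sg] by auto
  hence "e' \<in> set_plus B EE" using E_sub by blast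
  moreover have "e' \<notin> B" using e' by blast
  ultimately show ?thesis using e' unfolding above_def by blast
qed

lemma proper: "B \<subset> set_plus B EE" using B_sub proper_witness by blast

lemma sum_sg: "add_subgroup (set_plus B EE)" using set_plus_sg[OF sgB E_sg] .

lemma sum_G: "set_plus B EE \<subseteq> Gs (Suc n)"
  using BG1 E_G sg_add[OF T_sub[OF T]] unfolding set_plus_def by blast

lemma bound:
  assumes h0: "h0 \<in> B" and x0: "x0 \<in> above B A" and y: "y \<in> supp (Ls h0)"
  shows "y \<le> x0"
proof (rule ccontr)
  assume "\<not> y \<le> x0" hence yx: "x0 < y" by simp
  define P where "P = Ls h0"
  have h0G: "h0 \<in> Gs (Suc n)" using h0 BG1 by blast
  have "anti_wo (supp P)" using Ls_ser[OF T h0G] unfolding P_def series_on_def by blast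
  then obtain M where M: "M \<in> supp P" "\<forall>z\<in>supp P. z \<le> M" using anti_wo_max y P_def by blast
  have Mx: "x0 < M" using M y yx P_def by force
  define m0 :: "'g \<Rightarrow> 'k" where "m0 = (\<lambda>z. if z = x0 then 1 else 0)"
  have sm: "supp m0 = {x0}" unfolding m0_def supp_def by auto
  have m0S: "m0 \<in> series_on (above B A)" unfolding series_on_def using sm x0 anti_wo_single by auto
  have m0nz: "m0 \<noteq> (\<lambda>_. 0)" unfolding m0_def by (metis one_neq_zero)
  have "sval m0 = x0" using sm sval_eq by fastforce
  hence "spos m0" unfolding spos_def m0_def using sm by (simp add: m0_def)
  hence sa: "sabs m0 = m0" unfolding sabs_def by simp
  have g1: "sless P m0" using gr h0 m0S m0nz sa unfolding growthP_def Log_mono_def P_def by metis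
  have "- h0 \<in> B" using h0 sg_neg[OF sgB] by blast
  hence g2: "sless (\<lambda>x. - P x) m0" using gr m0S m0nz sa Lsneg[OF T h0G]
    unfolding growthP_def Log_mono_def P_def by metis
  have PM: "P M \<noteq> 0" using M(1) unfolding supp_def by simp
  have m0M: "m0 M = 0" using Mx unfolding m0_def by simp
  have bigz: "\<And>z. M < z \<Longrightarrow> m0 z = 0 \<and> P z = 0"
  proof -
    fix z assume "M < z"
    hence "z \<notin> supp P" "z \<noteq> x0" using M Mx by (auto simp: not_le[symmetric])
    thus "m0 z = 0 \<and> P z = 0" unfolding m0_def supp_def by simp
  qed
  show False
  proof (cases "P M > 0")
    case True
    define D where "D = (\<lambda>x. m0 x - P x)"
    have "M \<in> supp D" unfolding D_def supp_def using m0M PM by simp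
    moreover have "\<forall>z\<in>supp D. z \<le> M"
      using bigz unfolding D_def supp_def by (metis (mono_tags) mem_Collect_eq not_le diff_self)
    ultimately have "sval D = M" by (rule sval_eq)
    moreover have "spos D" using g1 unfolding sless_def D_def .
    ultimately have "D M > 0" unfolding spos_def by simp
    thus False using True m0M unfolding D_def by simp
  next
    case False
    hence PM': "P M < 0" using PM by simp
    define D where "D = (\<lambda>x. m0 x - - P x)"
    have "M \<in> supp D" unfolding D_def supp_def using m0M PM by simp
    moreover have "\<forall>z\<in>supp D. z \<le> M"
      using bigz unfolding D_def supp_def by (metis (mono_tags) mem_Collect_eq not_le diff_self neg_0_equal_iff_equal)
    ultimately have "sval D = M" by (rule sval_eq)
    moreover have "spos D" using g2 unfolding sless_def D_def .
    ultimately have "D M > 0" unfolding spos_def by simp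
    thus False using PM' m0M unfolding D_def by simp
  qed
qed

lemma growth_next: "growthP Ls (set_plus B EE) B"
  unfolding growthP_def Log_mono_def
proof (intro ballI impI)
  fix h and f :: "'g \<Rightarrow> 'k" assume h: "h \<in> set_plus B EE" and f: "f \<in> series_on (above (set_plus B EE) B)" and fnz: "f \<noteq> (\<lambda>_. 0)"
  from h obtain h0 e where he: "h = h0 + e" "h0 \<in> B" "e \<in> EE" unfolding set_plus_def by blast
  obtain x0 where x0: "x0 \<in> above B A" using ne by blast
  have x0B: "x0 \<in> B" using x0 unfolding above_def by blast
  have "supp f \<noteq> {}" using fnz unfolding supp_def by auto
  moreover have "anti_wo (supp f)" using f unfolding series_on_def by blast
  ultimately obtain m where m: "m \<in> supp f" "\<forall>y\<in>supp f. y \<le> m" using anti_wo_max by blast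
  have mB: "\<forall>b\<in>B. b < m" using m(1) f unfolding series_on_def above_def by blast
  have h0G: "h0 \<in> Gs (Suc n)" and eG: "e \<in> Gs (Suc n)" using he BG1 E_G by auto
  have Lh: "Ls h = (\<lambda>x. Ls h0 x + Ls e x)" using T_add[OF T h0G eG] he by simp
  have eS: "Ls e \<in> series_on (above B A)" using he unfolding Exp_set_def by blast
  have small: "\<forall>y\<in>supp (Ls h). y < m"
  proof
    fix y assume "y \<in> supp (Ls h)"
    hence "y \<in> supp (Ls h0) \<or> y \<in> supp (Ls e)" using Lh supp_add[of "Ls h0" "Ls e"] by auto
    thus "y < m"
    proof
      assume "y \<in> supp (Ls h0)"
      hence "y \<le> x0" using bound he x0 by blast
      thus "y < m" using mB x0B by force
    next
      assume "y \<in> supp (Ls e)"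
      hence "y \<in> B" using eS unfolding series_on_def above_def by blast
      thus "y < m" using mB by blast
    qed
  qed
  define F where "F = sabs f"
  have Fm: "F m > 0" and sF: "supp F = supp f" using sabs_lead[OF m] F_def by auto
  define D where "D = (\<lambda>x. F x - Ls h x)"
  have Lhm: "Ls h m = 0" using small unfolding supp_def by blast
  have "m \<in> supp D" unfolding D_def supp_def using Fm Lhm by simp
  moreover have "\<forall>z\<in>supp D. z \<le> m"
  proof
    fix z assume z: "z \<in> supp D"
    show "z \<le> m"
    proof (rule ccontr)
      assume "\<not> z \<le> m" hence "m < z" by simp
      hence "z \<notin> supp F" "z \<notin> supp (Ls h)" using m sF small by (auto simp: not_le[symmetric])
      hence "D z = 0" unfolding D_def supp_def by simp
      thus False using z unfolding supp_def by simp
    qed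
  qed
  ultimately have "sval D = m" by (rule sval_eq)
  hence "spos D" unfolding spos_def using \<open>m \<in> supp D\<close> Fm Lhm D_def by auto
  thus "sless (Ls h) (sabs f)" unfolding sless_def D_def F_def .
qed

end

theorem proposition8:
  fixes lg :: "'k::linordered_field \<Rightarrow> 'k"
    and G H :: "'g::linordered_ab_group_add set"
    and l Ls :: "'g \<Rightarrow> 'g \<Rightarrow> 'k"
    and Gs :: "nat \<Rightarrow> 'g set"
  assumes "is_log lg"
    and "add_subgroup G"
    and "is_prelog_section G l"
    and "is_exp_tower G l Gs Ls"
    and "add_subgroup H" and "H \<subseteq> G" and "H \<noteq> {0}"
    and "growth_axiom Ls H"
  shows "\<forall>n. add_subgroup (Htow Gs Ls H (Suc n))
           \<and> Htow Gs Ls H (Suc n) \<subset> Htow Gs Ls H (Suc (Suc n))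
           \<and> add_subgroup (Htow Gs Ls H (Suc (Suc n)))
           \<and> convex_in (Htow Gs Ls H (Suc n)) (Htow Gs Ls H (Suc (Suc n)))
           \<and> antilex_product (Htow Gs Ls H (Suc (Suc n))) (Htow Gs Ls H (Suc n))
               (Exp_set Gs Ls n (series_on (above (Htow Gs Ls H (Suc n)) (Htow Gs Ls H n))))
           \<and> (\<forall>h\<in>Htow Gs Ls H (Suc (Suc n)).
                 \<forall>f\<in>series_on (above (Htow Gs Ls H (Suc (Suc n))) (Htow Gs Ls H (Suc n))).
                   f \<noteq> (\<lambda>_. 0) \<longrightarrow> sless (Log_mono Ls h) (sabs f))"
proof -
  note T = assms(4)
  define HT where "HT = Htow Gs Ls H"
  have HS: "HT (Suc (Suc n)) = set_plus (HT (Suc n))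
       (Exp_set Gs Ls n (series_on (above (HT (Suc n)) (HT n))))" for n
    unfolding HT_def by simp
  define inv where "inv n \<longleftrightarrow> add_subgroup (HT (Suc n)) \<and> HT (Suc n) \<subseteq> Gs n \<and> 0 \<in> HT n
     \<and> above (HT (Suc n)) (HT n) \<noteq> {} \<and> growthP Ls (HT (Suc n)) (HT n)" for n
  have abv: "above H {0} = {x\<in>H. 0 < x}" unfolding above_def by auto
  have inv0: "inv 0"
  proof -
    have G0: "Gs 0 = G" using T unfolding is_exp_tower_def by blast
    obtain x where x: "x \<in> H" "x \<noteq> 0" using assms(5,7) sg_zero by blast
    have "-x \<in> H" using x sg_neg[OF assms(5)] by blast
    hence "\<exists>y\<in>H. 0 < y" using x by (metis neg_0_less_iff_less linorder_neqE)
    hence "above H {0} \<noteq> {}" using abv by auto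
    moreover have "growthP Ls H {0}" using assms(8) unfolding growthP_def growth_axiom_def abv .
    ultimately show ?thesis unfolding inv_def HT_def using assms(5,6) G0 by simp
  qed
  have step: "inv (Suc n)" if I: "inv n" for n
  proof -
    have sgB: "add_subgroup (HT (Suc n))" and BG: "HT (Suc n) \<subseteq> Gs n" and A0: "0 \<in> HT n"
      and ne: "above (HT (Suc n)) (HT n) \<noteq> {}" and gr: "growthP Ls (HT (Suc n)) (HT n)"
      using I unfolding inv_def by auto
    show ?thesis unfolding inv_def HS
      using sum_sg[OF T sgB BG A0 ne gr] sum_G[OF T sgB BG A0 ne gr] sg_zero[OF sgB]
        proper_witness[OF T sgB BG A0 ne gr] growth_next[OF T sgB BG A0 ne gr] by blast
  qed
  have allinv: "inv n" for n by (induction n) (use inv0 step in auto)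
  show ?thesis unfolding HT_def[symmetric]
  proof
    fix n
    have sgB: "add_subgroup (HT (Suc n))" and BG: "HT (Suc n) \<subseteq> Gs n" and A0: "0 \<in> HT n"
      and ne: "above (HT (Suc n)) (HT n) \<noteq> {}" and gr: "growthP Ls (HT (Suc n)) (HT n)"
      using allinv[of n] unfolding inv_def by auto
    note facts = sum_sg[OF T sgB BG A0 ne gr] proper[OF T sgB BG A0 ne gr]
      convex[OF T sgB BG A0 ne gr] E_sg[OF T sgB BG A0 ne gr] BE[OF T sgB BG A0 ne gr]
      growth_next[OF T sgB BG A0 ne gr]
    show "add_subgroup (HT (Suc n))
           \<and> HT (Suc n) \<subset> HT (Suc (Suc n))
           \<and> add_subgroup (HT (Suc (Suc n)))
           \<and> convex_in (HT (Suc n)) (HT (Suc (Suc n)))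
           \<and> antilex_product (HT (Suc (Suc n))) (HT (Suc n))
               (Exp_set Gs Ls n (series_on (above (HT (Suc n)) (HT n))))
           \<and> (\<forall>h\<in>HT (Suc (Suc n)).
                 \<forall>f\<in>series_on (above (HT (Suc (Suc n))) (HT (Suc n))).
                   f \<noteq> (\<lambda>_. 0) \<longrightarrow> sless (Log_mono Ls h) (sabs f))"
      unfolding HS antilex_product_def using sgB facts unfolding growthP_def by blast
  qed
qed

end
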